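(* For any integers $r\ge t\ge 2$, there exists a connected graph $G$ such that $\mathrm{gp}(G)=r$ and $\omega(G_{\rm SR})=t$.
   Context: All graphs are finite and simple. For a connected graph $G$, a set $S\subseteq V(G)$ is a general position set if no three pairwise distinct vertices of $S$ lie on a common geodesic (shortest path); $\mathrm{gp}(G)$ is the maximum cardinality of a general position set. A vertex $u$ is maximally distant from $v$ if every neighbor $w$ of $u$ satisfies $d_G(v,w)\le d_G(u,v)$; $u,v$ are mutually maximally distant (MMD) if each is maximally distant from the other. The strong resolving graph $G_{\rm SR}$ has vertex set $V(G)$, distinct vertices adjacent iff MMD in $G$. $\omega$ is the clique number. *)

theory Defs
  imports Main
begin

definition simple_graph :: "'a set \<Rightarrow> ('a \<Rightarrow> 'a \<Rightarrow> bool) \<Rightarrow> bool" where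
  "simple_graph V E \<longleftrightarrow> finite V \<and> (\<forall>u v. E u v \<longrightarrow> u \<in> V \<and> v \<in> V)
     \<and> (\<forall>u v. E u v \<longrightarrow> E v u) \<and> (\<forall>u. \<not> E u u)"

definition walk :: "'a set \<Rightarrow> ('a \<Rightarrow> 'a \<Rightarrow> bool) \<Rightarrow> 'a list \<Rightarrow> bool" where
  "walk V E p \<longleftrightarrow> p \<noteq> [] \<and> set p \<subseteq> V \<and> (\<forall>i. Suc i < length p \<longrightarrow> E (p ! i) (p ! Suc i))"

definition walk_between :: "'a set \<Rightarrow> ('a \<Rightarrow> 'a \<Rightarrow> bool) \<Rightarrow> 'a \<Rightarrow> 'a \<Rightarrow> 'a list \<Rightarrow> bool" where
  "walk_between V E u v p \<longleftrightarrow> walk V E p \<and> hd p = u \<and> last p = v"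

definition connected_graph :: "'a set \<Rightarrow> ('a \<Rightarrow> 'a \<Rightarrow> bool) \<Rightarrow> bool" where
  "connected_graph V E \<longleftrightarrow> simple_graph V E \<and> V \<noteq> {}
     \<and> (\<forall>u\<in>V. \<forall>v\<in>V. \<exists>p. walk_between V E u v p)"

definition dist :: "'a set \<Rightarrow> ('a \<Rightarrow> 'a \<Rightarrow> bool) \<Rightarrow> 'a \<Rightarrow> 'a \<Rightarrow> nat" where
  "dist V E u v = (LEAST n. \<exists>p. walk_between V E u v p \<and> length p = Suc n)"

definition geodesic :: "'a set \<Rightarrow> ('a \<Rightarrow> 'a \<Rightarrow> bool) \<Rightarrow> 'a list \<Rightarrow> bool" where
  "geodesic V E p \<longleftrightarrow> walk V E p \<and> length p = Suc (dist V E (hd p) (last p))"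

definition gp_set :: "'a set \<Rightarrow> ('a \<Rightarrow> 'a \<Rightarrow> bool) \<Rightarrow> 'a set \<Rightarrow> bool" where
  "gp_set V E S \<longleftrightarrow> S \<subseteq> V \<and> (\<forall>x\<in>S. \<forall>y\<in>S. \<forall>z\<in>S.
      x \<noteq> y \<and> y \<noteq> z \<and> x \<noteq> z \<longrightarrow>
      \<not> (\<exists>p. geodesic V E p \<and> x \<in> set p \<and> y \<in> set p \<and> z \<in> set p))"

definition gp_number :: "'a set \<Rightarrow> ('a \<Rightarrow> 'a \<Rightarrow> bool) \<Rightarrow> nat" where
  "gp_number V E = Max (card ` {S. gp_set V E S})"

definition maximally_distant :: "'a set \<Rightarrow> ('a \<Rightarrow> 'a \<Rightarrow> bool) \<Rightarrow> 'a \<Rightarrow> 'a \<Rightarrow> bool" where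
  "maximally_distant V E u v \<longleftrightarrow> (\<forall>w\<in>V. E u w \<longrightarrow> dist V E v w \<le> dist V E u v)"

definition MMD :: "'a set \<Rightarrow> ('a \<Rightarrow> 'a \<Rightarrow> bool) \<Rightarrow> 'a \<Rightarrow> 'a \<Rightarrow> bool" where
  "MMD V E u v \<longleftrightarrow> maximally_distant V E u v \<and> maximally_distant V E v u"

definition SR_edge :: "'a set \<Rightarrow> ('a \<Rightarrow> 'a \<Rightarrow> bool) \<Rightarrow> 'a \<Rightarrow> 'a \<Rightarrow> bool" where
  "SR_edge V E u v \<longleftrightarrow> u \<in> V \<and> v \<in> V \<and> u \<noteq> v \<and> MMD V E u v"

definition clique :: "'a set \<Rightarrow> ('a \<Rightarrow> 'a \<Rightarrow> bool) \<Rightarrow> 'a set \<Rightarrow> bool" where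
  "clique V E K \<longleftrightarrow> K \<subseteq> V \<and> (\<forall>x\<in>K. \<forall>y\<in>K. x \<noteq> y \<longrightarrow> E x y)"

definition clique_number :: "'a set \<Rightarrow> ('a \<Rightarrow> 'a \<Rightarrow> bool) \<Rightarrow> nat" where
  "clique_number V E = Max (card ` {K. clique V E K})"

end

theory Submission
  imports Defs
begin

lemma walk_single: "u \<in> V \<Longrightarrow> walk_between V E u u [u]"
  by (simp add: walk_between_def walk_def)

lemma walk_two: "u \<in> V \<Longrightarrow> v \<in> V \<Longrightarrow> E u v \<Longrightarrow> walk_between V E u v [u,v]"
  by (auto simp: walk_between_def walk_def less_Suc_eq)

lemma walk_three: "u \<in> V \<Longrightarrow> v \<in> V \<Longrightarrow> w \<in> V \<Longrightarrow> E u w \<Longrightarrow> E w v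
   \<Longrightarrow> walk_between V E u v [u,w,v]"
  by (auto simp: walk_between_def walk_def less_Suc_eq nth_Cons split: nat.splits)

lemma dist_le: "walk_between V E u v p \<Longrightarrow> dist V E u v \<le> length p - 1"
proof -
  assume h: "walk_between V E u v p"
  then have "p \<noteq> []" by (simp add: walk_between_def walk_def)
  then have "length p = Suc (length p - 1)" by simp
  with h show ?thesis unfolding dist_def by (metis (mono_tags, lifting) Least_le)
qed

lemma dist_witness: "walk_between V E u v q \<Longrightarrow>
   \<exists>p. walk_between V E u v p \<and> length p = Suc (dist V E u v)"
proof -
  assume h: "walk_between V E u v q"
  then have "q \<noteq> []" by (simp add: walk_between_def walk_def)
  then have "\<exists>n p. walk_between V E u v p \<and> length p = Suc n" using h
    by (metis Suc_pred length_greater_0_conv)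
  then show ?thesis unfolding dist_def by (rule LeastI_ex)
qed

lemma dist_pos: "walk_between V E u v q \<Longrightarrow> u \<noteq> v \<Longrightarrow> dist V E u v \<noteq> 0"
proof
  assume q: "walk_between V E u v q" and ne: "u \<noteq> v" and d: "dist V E u v = 0"
  obtain p where p: "walk_between V E u v p" "length p = Suc (dist V E u v)"
    using dist_witness[OF q] by blast
  have "length p = Suc 0" using p(2) d by simp
  then obtain a where "p = [a]" by (auto simp: length_Suc_conv)
  then show False using p(1) ne by (auto simp: walk_between_def)
qed

lemma dist_ne1: "walk_between V E u v q \<Longrightarrow> \<not> E u v \<Longrightarrow> dist V E u v \<noteq> 1"
proof
  assume q: "walk_between V E u v q" and ne: "\<not> E u v" and d: "dist V E u v = 1"
  obtain p where p: "walk_between V E u v p" "length p = Suc (dist V E u v)"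
    using dist_witness[OF q] by blast
  have "length p = Suc (Suc 0)" using p(2) d by simp
  then obtain a b where ab: "p = [a,b]" by (auto simp: length_Suc_conv)
  have "E a b" using p(1) ab by (auto simp: walk_between_def walk_def)
  then show False using p(1) ab ne by (simp add: walk_between_def)
qed

definition GV :: "nat \<Rightarrow> nat \<Rightarrow> nat set" where "GV r t = {..<r*t}"
definition GE :: "nat \<Rightarrow> nat \<Rightarrow> nat \<Rightarrow> nat \<Rightarrow> bool" where
  "GE r t u v \<longleftrightarrow> u < r*t \<and> v < r*t \<and> u div t \<noteq> v div t"

locale gr =
  fixes r t :: nat
  assumes t2: "2 \<le> t" and tr: "t \<le> r"
begin

abbreviation "V \<equiv> GV r t"
abbreviation "E \<equiv> GE r t"

lemma r2: "2 \<le> r" using t2 tr by simp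

lemma simple: "simple_graph V E"
  by (auto simp: simple_graph_def GE_def GV_def)

lemma part_lt: "v \<in> V \<Longrightarrow> v div t < r"
  by (simp add: GV_def less_mult_imp_div_less)

lemma other: "v \<in> V \<Longrightarrow> \<exists>w\<in>V. E v w"
proof -
  assume v: "v \<in> V"
  define w where "w = ((v div t + 1) mod r) * t"
  have "(v div t + 1) mod r \<noteq> v div t"
  proof (cases "v div t + 1 < r")
    case True then show ?thesis by simp
  next
    case False then have "v div t + 1 = r" using part_lt[OF v] by simp
    then show ?thesis using r2 by simp
  qed
  moreover have wd: "w div t = (v div t + 1) mod r" using t2 by (simp add: w_def)
  moreover have "(v div t + 1) mod r < r" using r2 by simp
  then have wl: "w < r * t" unfolding w_def using t2 by simp
  ultimately have ne: "v div t \<noteq> w div t" by simp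
  have vl: "v < r * t" using v by (simp add: GV_def)
  show ?thesis
  proof (rule bexI[of _ w])
    show "w \<in> V" using wl by (simp add: GV_def)
    show "E v w" using vl wl ne unfolding GE_def by blast
  qed
qed

lemma walk_ex: "u \<in> V \<Longrightarrow> v \<in> V \<Longrightarrow> \<exists>p. walk_between V E u v p \<and> length p \<le> 3"
proof -
  assume u: "u \<in> V" and v: "v \<in> V"
  show ?thesis
  proof (cases "u = v")
    case True then show ?thesis using walk_single[where V=V and E=E, OF u] by force
  next
    case ne: False
    show ?thesis
    proof (cases "E u v")
      case True then show ?thesis using walk_two[where V=V and E=E, OF u v] by force
    next
      case False
      then have "u div t = v div t" using u v by (auto simp: GE_def GV_def)
      obtain w where "w \<in> V" "E u w" using other[OF u] by blast
      then have "E w v" using \<open>u div t = v div t\<close> u v by (auto simp: GE_def GV_def)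
      then show ?thesis using walk_three[where V=V and E=E, OF u v \<open>w \<in> V\<close> \<open>E u w\<close>] by force
    qed
  qed
qed

lemma dist_le2: "u \<in> V \<Longrightarrow> v \<in> V \<Longrightarrow> dist V E u v \<le> 2"
  using walk_ex dist_le by (metis diff_le_mono numeral_3_eq_3 diff_Suc_1 le_trans numeral_2_eq_2)

lemma dist_E: "E u v \<Longrightarrow> dist V E u v = 1"
proof -
  assume h: "E u v"
  then have uv: "u \<in> V" "v \<in> V" "u \<noteq> v" by (auto simp: GE_def GV_def)
  have "dist V E u v \<le> 1" using dist_le[OF walk_two[where V=V and E=E, OF uv(1,2) h]] by simp
  moreover have "dist V E u v \<noteq> 0" using dist_pos[OF walk_two[where V=V and E=E, OF uv(1,2) h] uv(3)] .
  ultimately show ?thesis by simp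
qed

lemma dist_same: "u \<in> V \<Longrightarrow> v \<in> V \<Longrightarrow> u \<noteq> v \<Longrightarrow> \<not> E u v \<Longrightarrow> dist V E u v = 2"
proof -
  assume uv: "u \<in> V" "v \<in> V" "u \<noteq> v" "\<not> E u v"
  obtain q where q: "walk_between V E u v q" using walk_ex[OF uv(1,2)] by blast
  show ?thesis using dist_le2[OF uv(1,2)] dist_pos[OF q uv(3)] dist_ne1[OF q uv(4)] by linarith
qed

lemma connected: "connected_graph V E"
proof -
  have "0 \<in> V" using t2 r2 by (simp add: GV_def)
  then show ?thesis unfolding connected_graph_def using simple walk_ex by blast
qed

lemma geo_triple:
  assumes g: "geodesic V E p" and xyz: "x \<in> set p" "y \<in> set p" "z \<in> set p" "x \<noteq> y" "y \<noteq> z" "x \<noteq> z"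
  shows "\<exists>a b c. {a,b,c} = {x,y,z} \<and> E a b \<and> E b c \<and> a \<noteq> c \<and> \<not> E a c"
proof -
  have w: "walk V E p" and l: "length p = Suc (dist V E (hd p) (last p))"
    using g by (auto simp: geodesic_def)
  have "p \<noteq> []" "set p \<subseteq> V" using w by (auto simp: walk_def)
  then have "hd p \<in> V" "last p \<in> V" by auto
  then have "length p \<le> 3" using l dist_le2 by simp
  have "{x,y,z} \<subseteq> set p" using xyz by auto
  then have "card {x,y,z} \<le> card (set p)" by (simp add: card_mono)
  also have "\<dots> \<le> length p" by (rule card_length)
  finally have "length p \<ge> 3" using xyz by simp
  with \<open>length p \<le> 3\<close> have l3: "length p = 3" by simp
  then have "\<exists>a b c. p = [a,b,c]" by (auto simp: numeral_3_eq_3 length_Suc_conv)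
  then obtain a b c where p: "p = [a,b,c]" by blast
  have eab: "E a b" and ebc: "E b c" using w p by (auto simp: walk_def)
  have "dist V E a c = 2" using l l3 p by simp
  moreover have "a \<in> V" "c \<in> V" using \<open>set p \<subseteq> V\<close> p by auto
  ultimately have "a \<noteq> c"
    using dist_le[OF walk_single[where V=V and E=E, OF \<open>a \<in> V\<close>]] by auto
  have "\<not> E a c" using dist_E \<open>dist V E a c = 2\<close> by auto
  have "{a,b,c} = {x,y,z}" using xyz p by auto
  then show ?thesis using eab ebc \<open>a \<noteq> c\<close> \<open>\<not> E a c\<close> by blast
qed

lemma gp_no_triple:
  assumes g: "gp_set V E S" and S: "a\<in>S" "b\<in>S" "c\<in>S"
    and e: "E a b" "E b c" "a \<noteq> c" "\<not> E a c"
  shows False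
proof -
  have V: "a \<in> V" "b \<in> V" "c \<in> V" using e by (auto simp: GE_def GV_def)
  have d: "a \<noteq> b" "b \<noteq> c" using e by (auto simp: GE_def)
  have "walk_between V E a c [a,b,c]" by (rule walk_three[where V=V and E=E, OF V(1,3,2) e(1,2)])
  moreover have "dist V E a c = 2" using dist_same[OF V(1,3) e(3,4)] .
  ultimately have "geodesic V E [a,b,c]" by (simp add: geodesic_def walk_between_def)
  moreover have "\<not> (\<exists>p. geodesic V E p \<and> a \<in> set p \<and> b \<in> set p \<and> c \<in> set p)"
    using g S d e(3) unfolding gp_set_def by blast
  moreover have "a \<in> set [a,b,c]" "b \<in> set [a,b,c]" "c \<in> set [a,b,c]" by simp_all
  ultimately show False by blast
qed

lemma triple_gp:
  assumes SV: "S \<subseteq> V" and h: "\<forall>a\<in>S. \<forall>b\<in>S. \<forall>c\<in>S. E a b \<and> E b c \<and> a \<noteq> c \<longrightarrow> E a c"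
  shows "gp_set V E S"
  unfolding gp_set_def
proof (intro conjI SV ballI impI notI)
  fix x y z assume xyz: "x \<in> S" "y \<in> S" "z \<in> S" "x \<noteq> y \<and> y \<noteq> z \<and> x \<noteq> z"
    and "\<exists>p. geodesic V E p \<and> x \<in> set p \<and> y \<in> set p \<and> z \<in> set p"
  then obtain p where p: "geodesic V E p" "x \<in> set p" "y \<in> set p" "z \<in> set p" by blast
  have xd: "x \<noteq> y" "y \<noteq> z" "x \<noteq> z" using xyz(4) by auto
  obtain a b c where abc: "{a,b,c} = {x,y,z}" "E a b" "E b c" "a \<noteq> c" "\<not> E a c"
    using geo_triple[OF p xd] by blast
  have "{a,b,c} \<subseteq> S" unfolding abc(1) using xyz(1-3) by simp
  then have "a \<in> S" "b \<in> S" "c \<in> S" by auto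
  then show False using h abc by blast
qed

lemma part_sub: "{v::nat. v div t = q} \<subseteq> (\<lambda>j. q*t+j) ` {..<t}"
proof
  fix v :: nat assume "v \<in> {v. v div t = q}"
  then have "v div t = q" by simp
  then have "v = q*t + v mod t" using div_mult_mod_eq[of v t] by simp
  moreover have "v mod t < t" using t2 by simp
  ultimately show "v \<in> (\<lambda>j. q*t+j) ` {..<t}" by (intro image_eqI[of _ _ "v mod t"]) auto
qed

lemma part_card: "finite {v::nat. v div t = q}" "card {v::nat. v div t = q} \<le> t"
proof -
  show "finite {v::nat. v div t = q}" using part_sub by (rule finite_subset) simp
  have "card {v::nat. v div t = q} \<le> card ((\<lambda>j. q*t+j) ` {..<t})"
    using part_sub by (rule card_mono[rotated]) simp
  also have "\<dots> \<le> card {..<t}" by (rule card_image_le) simp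
  finally show "card {v::nat. v div t = q} \<le> t" by simp
qed

lemma sub_part_card: "S \<subseteq> {v::nat. v div t = q} \<Longrightarrow> card S \<le> t"
  using part_card card_mono le_trans by metis

lemma gp_card:
  assumes g: "gp_set V E S" shows "card S \<le> r"
proof (cases "\<exists>a\<in>S. \<exists>c\<in>S. a \<noteq> c \<and> a div t = c div t")
  case True
  then obtain a c where ac: "a \<in> S" "c \<in> S" "a \<noteq> c" "a div t = c div t" by blast
  have SV: "S \<subseteq> V" using g by (simp add: gp_set_def)
  have "S \<subseteq> {v. v div t = a div t}"
  proof
    fix b assume b: "b \<in> S"
    show "b \<in> {v. v div t = a div t}"
    proof (rule ccontr)
      assume "b \<notin> {v. v div t = a div t}"
      then have "E a b" "E b c" "\<not> E a c" using ac b SV by (auto simp: GE_def GV_def)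
      then show False using gp_no_triple[OF g ac(1) b ac(2)] ac(3) by blast
    qed
  qed
  then have "card S \<le> t" by (rule sub_part_card)
  then show ?thesis using tr by simp
next
  case False
  then have "inj_on (\<lambda>v. v div t) S" by (auto simp: inj_on_def)
  moreover have "(\<lambda>v. v div t) ` S \<subseteq> {..<r}" using g part_lt by (auto simp: gp_set_def)
  ultimately have "card S \<le> card {..<r}" by (rule card_inj_on_le) simp
  then show ?thesis by simp
qed

lemma gp_lower: "gp_set V E ((\<lambda>i. i*t) ` {..<r})" "card ((\<lambda>i. i*t) ` {..<r}) = r"
proof -
  have inj: "inj_on (\<lambda>i. i*t) {..<r}" using t2 by (auto simp: inj_on_def)
  then show "card ((\<lambda>i. i*t) ` {..<r}) = r" by (simp add: card_image)
  have SV: "(\<lambda>i. i*t) ` {..<r} \<subseteq> V" using t2 by (auto simp: GV_def)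
  have "\<forall>a\<in>(\<lambda>i. i*t) ` {..<r}. \<forall>c\<in>(\<lambda>i. i*t) ` {..<r}. a \<noteq> c \<longrightarrow> E a c"
    using t2 by (auto simp: GE_def)
  then show "gp_set V E ((\<lambda>i. i*t) ` {..<r})" using triple_gp[OF SV] by blast
qed

lemma finV: "finite V" by (simp add: GV_def)

lemma gp_num: "gp_number V E = r"
  unfolding gp_number_def
proof (rule Max_eqI)
  have "{S. gp_set V E S} \<subseteq> Pow V" by (auto simp: gp_set_def)
  then have "finite {S. gp_set V E S}" using finV by (meson finite_Pow_iff finite_subset)
  then show "finite (card ` {S. gp_set V E S})" by simp
  show "\<And>y. y \<in> card ` {S. gp_set V E S} \<Longrightarrow> y \<le> r" using gp_card by auto
  show "r \<in> card ` {S. gp_set V E S}" using gp_lower by (metis (mono_tags) image_eqI mem_Collect_eq)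
qed

lemma not_mmd:
  assumes e: "E a x" shows "\<not> maximally_distant V E a x"
proof
  assume md: "maximally_distant V E a x"
  define q where "q = x div t"
  define j where "j = (if x mod t = 0 then 1 else 0::nat)"
  define w where "w = q*t + j"
  have j: "j < t" using t2 by (simp add: j_def)
  have wq: "w div t = q" using j by (simp add: w_def)
  have wm: "w mod t = j" using j by (simp add: w_def)
  have "w \<noteq> x" using wm j_def t2 by (auto split: if_splits)
  have xV: "x \<in> V" and aV: "a \<in> V" using e by (auto simp: GE_def GV_def)
  have "q < r" using part_lt[OF xV] by (simp add: q_def)
  then have "Suc q * t \<le> r * t" by (metis Suc_leI mult_le_mono1)
  then have wV: "w \<in> V" using j by (simp add: w_def GV_def)
  have "E a w" using e wq wV by (auto simp: GE_def GV_def q_def)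
  have "\<not> E x w" using wq by (simp add: GE_def q_def)
  then have "dist V E x w = 2" using dist_same[OF xV wV] \<open>w \<noteq> x\<close> by simp
  moreover have "dist V E a x = 1" using dist_E[OF e] .
  moreover have "dist V E x w \<le> dist V E a x" using md wV \<open>E a w\<close> by (simp add: maximally_distant_def)
  ultimately show False by simp
qed

lemma clique_card:
  assumes k: "clique V (SR_edge V E) K" shows "card K \<le> t"
proof (cases "K = {}")
  case True then show ?thesis by simp
next
  case False
  then obtain a where a: "a \<in> K" by blast
  have "K \<subseteq> {v. v div t = a div t}"
  proof
    fix x assume x: "x \<in> K"
    show "x \<in> {v. v div t = a div t}"
    proof (cases "x = a")
      case True then show ?thesis by simp
    next
      case False
      then have "SR_edge V E a x" using k a x by (auto simp: clique_def)
      then have "a \<in> V" "x \<in> V" "MMD V E a x" by (auto simp: SR_edge_def)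
      then have "\<not> E a x" using not_mmd by (auto simp: MMD_def)
      then show ?thesis using \<open>a \<in> V\<close> \<open>x \<in> V\<close> by (auto simp: GE_def GV_def)
    qed
  qed
  then show ?thesis by (rule sub_part_card)
qed

lemma clique_lower: "clique V (SR_edge V E) {..<t}"
proof -
  have sub: "{..<t} \<subseteq> V" using r2 by (auto simp: GV_def)
  have "SR_edge V E x y" if "x < t" "y < t" "x \<noteq> y" for x y
  proof -
    have xV: "x \<in> V" and yV: "y \<in> V" using sub that by auto
    have "\<not> E x y" "\<not> E y x" using that by (auto simp: GE_def)
    then have "dist V E x y = 2" "dist V E y x = 2" using dist_same xV yV that(3) by auto
    then show ?thesis using xV yV that(3) dist_le2
      by (auto simp: SR_edge_def MMD_def maximally_distant_def)
  qed
  then show ?thesis using sub by (auto simp: clique_def)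
qed

lemma clique_num: "clique_number V (SR_edge V E) = t"
  unfolding clique_number_def
proof (rule Max_eqI)
  have "{K. clique V (SR_edge V E) K} \<subseteq> Pow V" by (auto simp: clique_def)
  then have "finite {K. clique V (SR_edge V E) K}" using finV by (meson finite_Pow_iff finite_subset)
  then show "finite (card ` {K. clique V (SR_edge V E) K})" by simp
  show "\<And>y. y \<in> card ` {K. clique V (SR_edge V E) K} \<Longrightarrow> y \<le> t" using clique_card by auto
  show "t \<in> card ` {K. clique V (SR_edge V E) K}" using clique_lower
    by (metis (mono_tags) card_lessThan image_eqI mem_Collect_eq)
qed

end

theorem proposition3p5:
  fixes r t :: nat
  assumes "2 \<le> t" and "t \<le> r"
  shows "\<exists>(V :: nat set) E. connected_graph V E \<and> gp_number V E = r
           \<and> clique_number V (SR_edge V E) = t"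
proof -
  interpret gr r t using assms by unfold_locales
  show ?thesis using connected gp_num clique_num by blast
qed

end
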